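(* Let $N,A,B\ge1$ and $a\in\mathbb Z^3$ with $|a|\sim A$. Then for either choice of sign $\pm$, $$\sup_{m\in\mathbb Z}\#\{n\in\mathbb Z^3:|n|\sim N,\ |n+a|\sim B,\ |\langle a+n\rangle\pm\langle n\rangle-m|\lesssim1\}\lesssim\min(A,B,N)^{-1}\min(B,N)^3.$$
   Context: $\langle n\rangle=(1+|n|^2)^{1/2}$. "$|x|\sim N$" means $c^{-1}N\le|x|\le cN$ for a fixed absolute constant $c$ (and $|x|\le c$ when the scale is $1$); "$\lesssim1$" inside the set means bounded by a fixed absolute constant. Implicit constants are absolute. *)

theory Defs
  imports "HOL-Analysis.Analysis"
begin

definition jbr :: "real ^ 3 \<Rightarrow> real" where
  "jbr x = sqrt (1 + (norm x)\<^sup>2)"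

definition sim :: "real \<Rightarrow> real \<Rightarrow> real \<Rightarrow> bool" where
  "sim c t N = (if N = 1 then t \<le> c else (N / c \<le> t \<and> t \<le> c * N))"

definition lattice3 :: "(real ^ 3) set" where
  "lattice3 = {x. \<forall>i. x $ i \<in> \<int>}"

end

theory Submission
  imports Defs
begin


lemma lattice_sep:
  assumes "n \<in> lattice3" "n' \<in> lattice3" "n \<noteq> n'"
  shows "norm (n - n') \<ge> 1"
proof -
  obtain i where i: "n $ i \<noteq> n' $ i" using assms(3) by (auto simp: vec_eq_iff)
  have "n $ i - n' $ i \<in> \<int>" using assms(1,2) by (auto simp: lattice3_def)
  then obtain k :: int where k: "n $ i - n' $ i = of_int k" by (auto elim: Ints_cases)
  with i have "k \<noteq> 0" by auto
  then have "\<bar>of_int k :: real\<bar> \<ge> 1" by linarith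
  also have "\<bar>of_int k :: real\<bar> \<le> norm (n - n')"
    using component_le_norm_cart[of "n - n'" i] k by simp
  finally show ?thesis .
qed

lemma lattice_bounded_finite: "finite {n \<in> lattice3. norm n \<le> R}"
proof -
  define I where "I = (of_int ` {-\<lceil>R\<rceil>..\<lceil>R\<rceil>} :: real set)"
  have fI: "finite I" by (simp add: I_def)
  have "{n \<in> lattice3. norm n \<le> R} \<subseteq> (\<lambda>f. \<chi> i. f i) ` (PiE UNIV (\<lambda>_. I))"
  proof
    fix n assume n: "n \<in> {n \<in> lattice3. norm n \<le> R}"
    have "\<forall>i. n $ i \<in> I"
    proof
      fix i
      have "n $ i \<in> \<int>" using n by (auto simp: lattice3_def)
      then obtain k :: int where k: "n $ i = of_int k" by (auto elim: Ints_cases)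
      have "\<bar>n $ i\<bar> \<le> R" using component_le_norm_cart[of n i] n by auto
      then have "\<bar>k\<bar> \<le> \<lceil>R\<rceil>" using k
        by (metis ceiling_mono ceiling_of_int of_int_abs)
      then have "k \<in> {-\<lceil>R\<rceil>..\<lceil>R\<rceil>}" by auto
      then show "n $ i \<in> I" using k unfolding I_def by auto
    qed
    then have "(\<lambda>i. n $ i) \<in> PiE UNIV (\<lambda>_. I)" by auto
    moreover have "n = (\<chi> i. n $ i)" by simp
    ultimately show "n \<in> (\<lambda>f. \<chi> i. f i) ` (PiE UNIV (\<lambda>_. I))" by blast
  qed
  moreover have "finite ((\<lambda>f. \<chi> i. f i) ` (PiE UNIV (\<lambda>_. I)))"
    by (intro finite_imageI finite_PiE) (auto simp: fI)
  ultimately show ?thesis by (rule finite_subset)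
qed

definition proj2 :: "real^3 \<Rightarrow> complex" where
  "proj2 x = Complex (x $ 1) (x $ 2)"

lemma norm3_sq: "(norm (x::real^3))^2 = (x$1)^2 + (x$2)^2 + (x$3)^2"
proof -
  have "(norm x)^2 = x \<bullet> x" by (rule power2_norm_eq_inner)
  also have "\<dots> = x$1 * x$1 + x$2 * x$2 + x$3 * x$3" by (simp add: inner_vec_def sum_3)
  finally show ?thesis by (simp add: power2_eq_square)
qed

lemma proj2_norm_sq: "(cmod (proj2 x))^2 = (norm x)^2 - (x$3)^2"
  by (simp add: proj2_def norm3_sq cmod_power2)

lemma proj2_diff: "proj2 x - proj2 y = proj2 (x - y)"
  by (simp add: proj2_def complex_eq_iff)

lemma measure_ball_complex:
  assumes "r \<ge> 0"
  shows "measure lebesgue (ball (z::complex) r) = pi * r^2"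
proof -
  have "measure lebesgue (ball z r) = measure lborel (ball z r)"
    by (rule measure_completion) simp
  also have "\<dots> = pi * r^2" using content_ball[OF assms, of z] unit_ball_vol_2 by simp
  finally show ?thesis .
qed

lemma measure_cball_complex:
  assumes "r \<ge> 0"
  shows "measure lebesgue (cball (z::complex) r) = pi * r^2"
proof -
  have "measure lebesgue (cball z r) = measure lborel (cball z r)"
    by (rule measure_completion) simp
  also have "\<dots> = pi * r^2" using content_cball[OF assms, of z] unit_ball_vol_2 by simp
  finally show ?thesis .
qed

lemma measure_ball_complex':
  "r \<ge> 0 \<Longrightarrow> measure lborel (ball (z::complex) r) = pi * r^2"
  using content_ball[of r z] unit_ball_vol_2 by simp
lemma measure_cball_complex':
  "r \<ge> 0 \<Longrightarrow> measure lborel (cball (z::complex) r) = pi * r^2"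
  using content_cball[of r z] unit_ball_vol_2 by simp

lemma packing:
  fixes Z :: "complex set"
  assumes fin: "finite Z" and sep: "\<And>z w. z\<in>Z \<Longrightarrow> w\<in>Z \<Longrightarrow> z\<noteq>w \<Longrightarrow> d \<le> dist z w"
    and d: "d > 0" and bnd: "\<And>z. z\<in>Z \<Longrightarrow> r1 \<le> norm z \<and> norm z \<le> r2"
    and r: "0 \<le> r1" "r1 \<le> r2"
  shows "real (card Z) * (d/2)^2 \<le> (r2 + d/2)^2 - (max 0 (r1 - d/2))^2"
proof -
  define \<rho> where "\<rho> = max 0 (r1 - d/2)"
  define R where "R = r2 + d/2"
  have \<rho>0: "\<rho> \<ge> 0" and \<rho>R: "\<rho> \<le> R" using r d by (auto simp: \<rho>_def R_def)
  have pw: "pairwise (\<lambda>x y. negligible (ball x (d/2) \<inter> ball y (d/2))) Z"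
  proof (rule pairwiseI)
    fix x y assume "x \<in> Z" "y \<in> Z" "x \<noteq> y"
    then have "d \<le> dist x y" using sep by blast
    then have "ball x (d/2) \<inter> ball y (d/2) = {}"
    proof (intro equals0I)
      fix p assume "p \<in> ball x (d/2) \<inter> ball y (d/2)"
      then have "dist x p < d/2" "dist y p < d/2" by auto
      moreover have "dist x y \<le> dist x p + dist p y" by (rule dist_triangle)
      moreover have "dist p y = dist y p" by (rule dist_commute)
      ultimately show False using \<open>d \<le> dist x y\<close> by linarith
    qed
    then show "negligible (ball x (d/2) \<inter> ball y (d/2))" by simp
  qed
  have U: "measure lebesgue (\<Union>z\<in>Z. ball z (d/2)) = (\<Sum>z\<in>Z. measure lebesgue (ball z (d/2)))"
    by (rule measure_negligible_finite_Union_image[OF fin _ pw]) simp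
  also have "\<dots> = real (card Z) * (pi * (d/2)^2)"
    using d by (simp add: measure_ball_complex')
  finally have U': "measure lebesgue (\<Union>z\<in>Z. ball z (d/2)) = real (card Z) * (pi * (d/2)^2)" .
  have sub: "(\<Union>z\<in>Z. ball z (d/2)) \<subseteq> cball 0 R - ball 0 \<rho>"
  proof
    fix p assume "p \<in> (\<Union>z\<in>Z. ball z (d/2))"
    then obtain z where z: "z \<in> Z" "dist z p < d/2" by auto
    have "norm p \<le> norm z + dist z p" "norm z \<le> norm p + dist z p"
      by (metis dist_norm norm_minus_commute norm_triangle_sub add.commute)
         (metis dist_norm norm_triangle_sub add.commute)
    then show "p \<in> cball 0 R - ball 0 \<rho>"
      using bnd[OF z(1)] z(2) by (auto simp: R_def \<rho>_def max_def split: if_splits)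
  qed
  have "measure lebesgue (\<Union>z\<in>Z. ball z (d/2)) \<le> measure lebesgue (cball 0 R - ball (0::complex) \<rho>)"
    by (rule measure_mono_fmeasurable[OF sub]) (auto intro!: fmeasurable_Diff sets.finite_UN fin)
  also have "\<dots> = pi * R^2 - pi * \<rho>^2"
    using \<rho>0 \<rho>R by (subst measurable_measure_Diff) (auto simp: measure_ball_complex measure_cball_complex measure_ball_complex' measure_cball_complex')
  finally have "real (card Z) * (pi * (d/2)^2) \<le> pi * (R^2 - \<rho>^2)" using U' by (simp add: algebra_simps)
  then show ?thesis unfolding R_def \<rho>_def by (simp add: mult.left_commute)
qed


lemma packing2:
  fixes Z :: "complex set"
  assumes fin: "finite Z" and sep: "\<And>z w. z\<in>Z \<Longrightarrow> w\<in>Z \<Longrightarrow> z\<noteq>w \<Longrightarrow> 1/2 \<le> dist z w"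
    and bnd: "\<And>z. z\<in>Z \<Longrightarrow> \<bar>(cmod z)^2 - q1\<bar> \<le> W" and W: "W \<ge> 0" and q1: "q1 \<ge> 0"
  shows "real (card Z) \<le> 16 * (2*W + sqrt (q1 + W) + 1)"
proof -
  define r1 where "r1 = sqrt (max 0 (q1 - W))"
  define r2 where "r2 = sqrt (q1 + W)"
  have r1sq: "r1^2 = max 0 (q1 - W)" unfolding r1_def by simp
  have r2sq: "r2^2 = q1 + W" unfolding r2_def using W q1 by simp
  have r1_0: "r1 \<ge> 0" and r12: "r1 \<le> r2" unfolding r1_def r2_def using W q1 by auto
  have b: "r1 \<le> cmod z \<and> cmod z \<le> r2" if "z \<in> Z" for z
  proof -
    have h: "\<bar>(cmod z)^2 - q1\<bar> \<le> W" using bnd[OF that] .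
    have "r1 \<le> sqrt ((cmod z)^2)" unfolding r1_def using h by (intro real_sqrt_le_mono) auto
    moreover have "sqrt ((cmod z)^2) \<le> r2" unfolding r2_def using h by (intro real_sqrt_le_mono) auto
    ultimately show ?thesis by simp
  qed
  have "real (card Z) * (1/2/2)^2 \<le> (r2 + 1/2/2)^2 - (max 0 (r1 - 1/2/2))^2"
    by (rule packing[OF fin sep _ b r1_0 r12]) auto
  moreover have "(r2 + 1/2/2)^2 - (max 0 (r1 - 1/2/2))^2 \<le> 2*W + r2 + 1"
  proof -
    have m: "(max 0 (r1 - 1/4))^2 \<ge> r1^2 - r1/2"
    proof (cases "r1 \<ge> 1/4")
      case True then show ?thesis by (simp add: max_def power2_eq_square algebra_simps)
    next
      case False
      then have "r1*r1 \<le> r1*(1/2)" using r1_0 by (intro mult_left_mono) auto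
      then show ?thesis using False by (simp add: max_def power2_eq_square)
    qed
    have "r2^2 - r1^2 \<le> 2*W" using r1sq r2sq by (simp add: max_def)
    moreover have "(r2 + 1/2/2)^2 = r2^2 + r2/2 + 1/16" by (simp add: power2_eq_square algebra_simps)
    ultimately show ?thesis using m r12 r1_0 by simp
  qed
  ultimately show ?thesis unfolding r2_def by (simp add: power2_eq_square)
qed

lemma slab_count:
  fixes e :: "real^3"
  assumes e: "norm e = 1" and TL: "T \<subseteq> lattice3" and r: "r \<ge> 0" and h: "h \<ge> 0"
   and sh: "\<And>n. n\<in>T \<Longrightarrow> r \<le> norm n \<and> norm n \<le> r + 1"
   and sl: "\<And>n n'. n\<in>T \<Longrightarrow> n'\<in>T \<Longrightarrow> \<bar>n \<bullet> e - n' \<bullet> e\<bar> \<le> h"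
  shows "finite T \<and> real (card T) \<le> 512 * (h+1) * (r+1)"
proof -
  have finT: "finite T"
    by (rule finite_subset[OF _ lattice_bounded_finite[of "r+1"]]) (use TL sh in auto)
  have te: "\<bar>n \<bullet> e\<bar> \<le> norm n" for n
    using Cauchy_Schwarz_ineq2[of n e] e by simp
  show ?thesis
  proof (cases "T = {}")
    case True then show ?thesis using r h by simp
  next
    case False
    then obtain n0 where n0: "n0 \<in> T" by auto
    define \<alpha> where "\<alpha> = n0 \<bullet> e - h"
    have ax: "norm (axis 3 1 :: real^3) = 1" by simp
    obtain F :: "real^3 \<Rightarrow> real^3" where F: "orthogonal_transformation F" "F e = axis 3 1"
      using orthogonal_transformation_exists[of e "axis 3 1 :: real^3"] e ax by metis
    have Fe3: "(F x) $ 3 = x \<bullet> e" for x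
    proof -
      have "(F x) $ 3 = F x \<bullet> axis 3 1" by (simp add: inner_axis)
      also have "\<dots> = F x \<bullet> F e" using F(2) by simp
      also have "\<dots> = x \<bullet> e" using F(1) unfolding orthogonal_transformation_def by blast
      finally show ?thesis .
    qed
    have Fn: "norm (F x) = norm x" for x using F(1) by (simp add: orthogonal_transformation)
    have Fd: "F x - F y = F (x - y)" for x y
      using F(1) unfolding orthogonal_transformation_def by (simp add: linear_diff)
    define z where "z x = proj2 (F x)" for x
    have zsq: "(cmod (z x))^2 = (norm x)^2 - (x \<bullet> e)^2" for x
      unfolding z_def by (simp add: proj2_norm_sq Fn Fe3)
    define Tj where "Tj j = {n \<in> T. \<alpha> + real j/2 \<le> n \<bullet> e \<and> n \<bullet> e \<le> \<alpha> + real j/2 + 1/2}" for j :: nat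
    define J where "J = nat \<lceil>4*h\<rceil>"
    have cover: "T \<subseteq> (\<Union>j\<in>{0..J}. Tj j)"
    proof
      fix n assume n: "n \<in> T"
      define t where "t = n \<bullet> e"
      have "\<bar>t - n0 \<bullet> e\<bar> \<le> h" using sl[OF n n0] by (simp add: t_def)
      then have t1: "\<alpha> \<le> t" "t \<le> \<alpha> + 2*h" by (auto simp: \<alpha>_def)
      define j where "j = nat \<lfloor>2*(t-\<alpha>)\<rfloor>"
      have rj: "real j = of_int \<lfloor>2*(t-\<alpha>)\<rfloor>" using t1 by (simp add: j_def)
      have "real j \<le> 2*(t-\<alpha>)" "2*(t-\<alpha>) < real j + 1" using rj
        by (simp, linarith)+
      then have "n \<in> Tj j" using n by (auto simp: Tj_def t_def)
      moreover have "j \<le> J"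
      proof -
        have "2*(t-\<alpha>) \<le> 4*h" using t1 by (simp add: algebra_simps)
        then have "\<lfloor>2*(t-\<alpha>)\<rfloor> \<le> \<lfloor>4*h\<rfloor>" by (rule floor_mono)
        also have "\<dots> \<le> \<lceil>4*h\<rceil>" by (rule floor_le_ceiling)
        finally show ?thesis unfolding j_def J_def by (rule nat_mono)
      qed
      ultimately show "n \<in> (\<Union>j\<in>{0..J}. Tj j)" by auto
    qed
    have cj: "real (card (Tj j)) \<le> 128 * (r+1)" for j
    proof (cases "Tj j = {}")
      case True then show ?thesis using r by simp
    next
      case False
      then obtain n1 where n1: "n1 \<in> Tj j" by auto
      have TjT: "Tj j \<subseteq> T" by (auto simp: Tj_def)
      have finj: "finite (Tj j)" using finT TjT finite_subset by blast
      have sep0: "1/2 \<le> dist (z n) (z n')" if "n \<in> Tj j" "n' \<in> Tj j" "n \<noteq> n'" for n n'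
      proof -
        have "norm (n - n') \<ge> 1" using lattice_sep that TL TjT by blast
        then have A: "(norm (n - n'))^2 \<ge> 1" by (simp add: one_le_power)
        have "\<bar>(n - n') \<bullet> e\<bar> \<le> 1/2" using that unfolding Tj_def inner_diff_left by (auto simp: abs_if)
        then have "\<bar>(n - n') \<bullet> e\<bar>^2 \<le> (1/2)^2" by (intro power_mono) auto
        then have B: "((n - n') \<bullet> e)^2 \<le> 1/4" by (simp add: power2_eq_square)
        have "dist (z n) (z n') = cmod (z (n - n'))"
          by (simp add: dist_norm z_def proj2_diff Fd)
        moreover have "(cmod (z (n - n')))^2 \<ge> 3/4" using zsq[of "n - n'"] A B by linarith
        ultimately have "(dist (z n) (z n'))^2 \<ge> 1/4" by simp
        then have "(1/2)^2 \<le> (dist (z n) (z n'))^2" by (simp add: power2_eq_square)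
        then have "1/2 \<le> sqrt ((dist (z n) (z n'))^2)" by (rule real_le_rsqrt)
        then show ?thesis by simp
      qed
      have injz: "inj_on z (Tj j)"
      proof (rule inj_onI, rule ccontr)
        fix n n' assume "n \<in> Tj j" "n' \<in> Tj j" "z n = z n'" "n \<noteq> n'"
        then have "1/2 \<le> dist (z n) (z n')" using sep0 by blast
        then show False using \<open>z n = z n'\<close> by simp
      qed
      define q1 where "q1 = (cmod (z n1))^2"
      have n1T: "n1 \<in> T" using n1 TjT by auto
      have bnd: "\<bar>(cmod w)^2 - q1\<bar> \<le> 3*r + 2" if wz: "w \<in> z ` Tj j" for w
      proof -
        obtain n where n: "n \<in> Tj j" "w = z n" using wz by auto
        have nT: "n \<in> T" using n TjT by auto
        have sq: "r^2 \<le> (norm x)^2 \<and> (norm x)^2 \<le> (r+1)^2" if "x \<in> T" for x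
          using sh[OF that] r by (auto intro: power_mono)
        have a1: "\<bar>(norm n)^2 - (norm n1)^2\<bar> \<le> 2*r+1"
        proof -
          have "(r+1)^2 = r^2 + 2*r + 1" by (simp add: power2_eq_square algebra_simps)
          then show ?thesis using sq[OF nT] sq[OF n1T] by (simp only: abs_le_iff) linarith
        qed
        have d: "\<bar>n \<bullet> e - n1 \<bullet> e\<bar> \<le> 1/2" using n(1) n1 unfolding Tj_def by (auto simp: abs_if)
        have s: "\<bar>n \<bullet> e + n1 \<bullet> e\<bar> \<le> 2*r+2" using te[of n] te[of n1] sh[OF nT] sh[OF n1T] by linarith
        have "(n \<bullet> e)^2 - (n1 \<bullet> e)^2 = (n \<bullet> e - n1 \<bullet> e) * (n \<bullet> e + n1 \<bullet> e)"
          by (simp add: power2_eq_square algebra_simps)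
        then have "\<bar>(n \<bullet> e)^2 - (n1 \<bullet> e)^2\<bar> = \<bar>n \<bullet> e - n1 \<bullet> e\<bar> * \<bar>n \<bullet> e + n1 \<bullet> e\<bar>"
          by (simp add: abs_mult)
        also have "\<dots> \<le> 1/2 * (2*r+2)" by (rule mult_mono) (use d s in auto)
        finally have a2: "\<bar>(n \<bullet> e)^2 - (n1 \<bullet> e)^2\<bar> \<le> r + 1" by simp
        show ?thesis using a1 a2 zsq[of n] zsq[of n1] unfolding q1_def n(2) abs_le_iff by linarith
      qed
      have "(norm n1)^2 \<le> (r+1)^2" using sh[OF n1T] by (intro power_mono) auto
      moreover have "0 \<le> (n1 \<bullet> e)^2" by simp
      ultimately have q1b: "q1 \<le> (r+1)^2" unfolding q1_def using zsq[of n1] by linarith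
      have q10: "q1 \<ge> 0" unfolding q1_def by simp
      have "real (card (z ` Tj j)) \<le> 16 * (2*(3*r+2) + sqrt (q1 + (3*r+2)) + 1)"
      proof (rule packing2)
        show "finite (z ` Tj j)" using finj by simp
        show "1/2 \<le> dist w w'" if "w \<in> z ` Tj j" "w' \<in> z ` Tj j" "w \<noteq> w'" for w w'
          using that sep0 by auto
      qed (use bnd r q10 in auto)
      moreover have "sqrt (q1 + (3*r+2)) \<le> r + 3"
      proof (rule real_le_lsqrt)
        show "q1 + (3*r+2) \<le> (r+3)^2" using q1b r by (simp add: power2_eq_square algebra_simps)
      qed (use q10 r in auto)
      moreover have "real (card (Tj j)) = real (card (z ` Tj j))" using injz by (simp add: card_image)
      ultimately have "real (card (Tj j)) \<le> 16 * (2*(3*r+2) + sqrt (q1 + (3*r+2)) + 1)"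
        "sqrt (q1 + (3*r+2)) \<le> r + 3" by simp_all
      then have "real (card (Tj j)) \<le> 16 * (2*(3*r+2) + (r+3) + 1)"
        by (meson order_trans mult_left_mono add_mono order_refl zero_le_numeral)
      then show ?thesis using r by (simp add: algebra_simps)
    qed
    have "card T \<le> card (\<Union>j\<in>{0..J}. Tj j)"
      by (rule card_mono) (use finT cover in \<open>auto simp: Tj_def\<close>)
    also have "\<dots> \<le> (\<Sum>j\<in>{0..J}. card (Tj j))" by (rule card_UN_le) simp
    finally have "real (card T) \<le> (\<Sum>j\<in>{0..J}. real (card (Tj j)))" by (metis of_nat_le_iff of_nat_sum)
    also have "\<dots> \<le> (\<Sum>j\<in>{0..J}. 128 * (r+1))" by (rule sum_mono) (rule cj)
    also have "\<dots> = (real J + 1) * (128 * (r+1))" by simp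
    also have "\<dots> \<le> (4*h + 2) * (128 * (r+1))"
      by (rule mult_right_mono) (use h r in \<open>auto simp: J_def, linarith\<close>)
    also have "\<dots> = ((4*h + 2) * 128) * (r+1)" by (simp only: mult.assoc)
    also have "\<dots> \<le> (512 * (h+1)) * (r+1)" using h r by (intro mult_right_mono) auto
    finally show ?thesis using finT by simp
  qed
qed


lemma jbr_sq: "(jbr x)^2 = 1 + (norm x)^2"
  unfolding jbr_def by simp

lemma jbr_ge: "norm x \<le> jbr x"
  unfolding jbr_def by (rule real_le_rsqrt) simp

lemma jbr_le: "jbr x \<le> 1 + norm x"
  unfolding jbr_def
proof (rule real_sqrt_le_iff[THEN iffD2, of "1 + (norm x)^2" "(1 + norm x)^2", simplified real_sqrt_abs, THEN order_trans])
  show "1 + (norm x)\<^sup>2 \<le> (1 + norm x)\<^sup>2" by (simp add: power2_eq_square algebra_simps)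
  show "\<bar>1 + norm x\<bar> \<le> 1 + norm x" by simp
qed

lemma jbr_nonneg: "0 \<le> jbr x"
  unfolding jbr_def by simp

lemma jbr_minus: "jbr (- x) = jbr x"
  unfolding jbr_def by simp

lemma key_identity:
  fixes a n :: "real^3" and s :: real
  assumes s: "s \<in> {1, -1}"
  defines "w \<equiv> jbr (a + n) + s * jbr n"
  shows "2 * (a \<bullet> n) = w^2 - 2 * s * w * jbr n - (norm a)^2"
proof -
  have s2: "s * s = 1" using s by auto
  have u2: "(jbr (a + n))^2 = 1 + (norm a)^2 + 2 * (a \<bullet> n) + (norm n)^2"
    unfolding jbr_sq by (simp add: power2_norm_eq_inner inner_add_left inner_add_right inner_commute)
  have v2: "(jbr n)^2 = 1 + (norm n)^2" by (rule jbr_sq)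
  have "w^2 - 2 * s * w * jbr n = (jbr (a + n))^2 - (s * s) * (jbr n)^2"
    unfolding w_def by (simp add: power2_eq_square algebra_simps)
  also have "\<dots> = (norm a)^2 + 2 * (a \<bullet> n)" using s2 u2 v2 by simp
  finally show ?thesis by simp
qed

lemma arith_core:
  fixes w w' v v' s m K A k x x' :: real
  assumes s: "s \<in> {1, -1}" and w: "\<bar>w - m\<bar> \<le> K" and w': "\<bar>w' - m\<bar> \<le> K"
    and wb: "\<bar>w\<bar> \<le> A + 2 * k + 4" and wb': "\<bar>w'\<bar> \<le> A + 2 * k + 4"
    and v: "k \<le> v" "v \<le> k + 2" and v': "k \<le> v'" "v' \<le> k + 2"
    and K: "K \<ge> 0" and A: "A \<ge> 0" and k: "k \<ge> 0"
    and x: "2 * x = w^2 - 2 * s*w* v - A^2" and x': "2 * x' = w'^2 - 2 * s*w'* v' - A^2"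
  shows "\<bar>x - x'\<bar> \<le> (4 * K+2) * (A + 2 * k + 4)"
proof -
  define B where "B = A + 2 * k + 4"
  have B0: "B \<ge> 0" using A k by (simp add: B_def)
  have ww: "\<bar>w - w'\<bar> \<le> 2 * K" using w w' unfolding abs_le_iff by linarith
  have wpw: "\<bar>w + w'\<bar> \<le> 2 * B"
  proof -
    have "\<bar>w\<bar> + \<bar>w'\<bar> \<le> (A + 2 * k + 4) + (A + 2 * k + 4)" by (rule add_mono[OF wb wb'])
    also have "\<dots> = 2 * B" unfolding B_def by simp
    finally show ?thesis by (rule order_trans[OF abs_triangle_ineq])
  qed
  have e1: "\<bar>w^2 - w'^2\<bar> \<le> 2 * K * (2 * B)"
  proof -
    have "\<bar>w^2 - w'^2\<bar> = \<bar>w - w'\<bar> * \<bar>w + w'\<bar>"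
      by (simp add: power2_eq_square algebra_simps abs_mult[symmetric] del: abs_mult)
    also have "\<dots> \<le> 2 * K * (2 * B)" by (rule mult_mono) (use ww wpw K in auto)
    finally show ?thesis .
  qed
  have vv: "\<bar>v - v'\<bar> \<le> 2" using v v' unfolding abs_le_iff by linarith
  have v'b: "\<bar>v'\<bar> \<le> k + 2" using v' k unfolding abs_le_iff by linarith
  have e2: "\<bar>w* v - w'* v'\<bar> \<le> B * 2 + (k+2) * (2 * K)"
  proof -
    have "w* v - w'* v' = w * (v - v') + v' * (w - w')" by (simp add: algebra_simps)
    then have "\<bar>w* v - w'* v'\<bar> \<le> \<bar>w\<bar> * \<bar>v - v'\<bar> + \<bar>v'\<bar> * \<bar>w - w'\<bar>"
      by (simp add: abs_mult[symmetric] del: abs_mult)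
    also have "\<dots> \<le> B * 2 + (k+2) * (2 * K)"
      by (intro add_mono mult_mono) (use wb vv v'b ww k K in \<open>auto simp: B_def\<close>)
    finally show ?thesis .
  qed
  have s1: "\<bar>s\<bar> = 1" using s by auto
  have "2 * (x - x') = (w^2 - w'^2) - 2 * s * (w * v - w' * v')" using x x' by (simp add: algebra_simps)
  then have "\<bar>2 * (x - x')\<bar> \<le> \<bar>w^2 - w'^2\<bar> + \<bar>2 * s * (w * v - w' * v')\<bar>"
    by (metis abs_triangle_ineq4)
  then have hA: "2 * \<bar>x - x'\<bar> \<le> \<bar>w^2 - w'^2\<bar> + 2 * \<bar>w * v - w' * v'\<bar>"
    by (simp only: abs_mult abs_numeral s1 mult_1_right)
  have B: "\<bar>w^2 - w'^2\<bar> + 2 * \<bar>w * v - w' * v'\<bar> \<le> 2 * K * (2 * B) + 2 * (B * 2 + (k + 2) * (2 * K))"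
    using e1 e2 by simp
  have C: "2 * K * (2 * B) + 2 * (B * 2 + (k + 2) * (2 * K)) = 2 * (2 * K * B + 2 * B + 2 * K * (k + 2))"
    by (simp add: algebra_simps)
  have "2 * \<bar>x - x'\<bar> \<le> 2 * (2 * K * B + 2 * B + 2 * K * (k + 2))"
    using hA B C by linarith
  then have "\<bar>x - x'\<bar> \<le> 2 * K * B + 2 * B + 2 * K * (k + 2)" by simp
  also have "\<dots> \<le> 2 * K * B + 2 * B + 2 * K * B"
    using K k A by (intro add_mono mult_left_mono) (auto simp: B_def)
  also have "\<dots> = (4 * K+2) * B" by (simp add: algebra_simps)
  finally show ?thesis unfolding B_def .
qed

lemma shell_triv:
  assumes TL: "T \<subseteq> lattice3" and k: "k \<ge> 0"
    and Tp: "\<And>n. n \<in> T \<Longrightarrow> k \<le> norm n \<and> norm n \<le> k + 1"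
  shows "finite T \<and> real (card T) \<le> 512 * (2 * k + 3) * (k + 1)"
proof -
  have "finite T \<and> real (card T) \<le> 512 * ((2 * k + 2) + 1) * (k + 1)"
  proof (rule slab_count[of "axis 1 1"])
    show "\<bar>n \<bullet> axis 1 1 - n' \<bullet> axis 1 1\<bar> \<le> 2 * k + 2" if "n \<in> T" "n' \<in> T" for n n'
    proof -
      have "\<bar>n \<bullet> axis 1 1\<bar> \<le> norm n" "\<bar>n' \<bullet> axis 1 1\<bar> \<le> norm n'"
        using Cauchy_Schwarz_ineq2[of n "axis 1 (1::real)"] Cauchy_Schwarz_ineq2[of n' "axis 1 (1::real)"]
        by auto
      then have "\<bar>n \<bullet> axis 1 1\<bar> + \<bar>n' \<bullet> axis 1 1\<bar> \<le> (k + 1) + (k + 1)"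
        using Tp[OF that(1)] Tp[OF that(2)] by (meson add_mono order_trans)
      then show ?thesis using abs_triangle_ineq4[of "n \<bullet> axis 1 1" "n' \<bullet> axis 1 1"] by linarith
    qed
  qed (use TL k Tp in auto)
  then show ?thesis by (simp add: algebra_simps)
qed

lemma shell_nontriv:
  fixes a :: "real^3"
  assumes a0: "a \<noteq> 0" and s: "s \<in> {1, -1}" and K: "K \<ge> 0" and k: "k \<ge> 0"
   and TL: "T \<subseteq> lattice3"
   and Tp: "\<And>n. n \<in> T \<Longrightarrow> k \<le> norm n \<and> norm n \<le> k + 1 \<and> \<bar>jbr (a + n) + s * jbr n - m\<bar> \<le> K"
  shows "finite T \<and> real (card T) \<le> 512 * ((4 * K + 2) * (norm a + 2 * k + 4) / norm a + 1) * (k + 1)"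
proof -
  have na: "norm a > 0" using a0 by simp
  define e where "e = (1 / norm a) *\<^sub>R a"
  have ne: "norm e = 1" using na by (simp add: e_def)
  have ie: "n \<bullet> e = (a \<bullet> n) / norm a" for n
    by (simp add: e_def inner_commute)
  have s1: "\<bar>s\<bar> = 1" using s by auto
  have bnd: "\<bar>jbr (a + n) + s * jbr n\<bar> \<le> norm a + 2 * k + 4" if "n \<in> T" for n
  proof -
    have "\<bar>jbr (a + n) + s * jbr n\<bar> \<le> \<bar>jbr (a + n)\<bar> + \<bar>s * jbr n\<bar>" by (rule abs_triangle_ineq)
    also have "\<dots> = jbr (a + n) + jbr n"
      using s1 jbr_nonneg[of "a + n"] jbr_nonneg[of n] by (simp add: abs_mult)
    also have "\<dots> \<le> (1 + norm (a + n)) + (1 + norm n)" using jbr_le[of "a + n"] jbr_le[of n] by simp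
    also have "\<dots> \<le> norm a + 2 * k + 4" using norm_triangle_ineq[of a n] Tp[OF that] by simp
    finally show ?thesis .
  qed
  have vb: "k \<le> jbr n \<and> jbr n \<le> k + 2" if "n \<in> T" for n
    using jbr_ge[of n] jbr_le[of n] Tp[OF that] by simp
  have diff: "\<bar>a \<bullet> n - a \<bullet> n'\<bar> \<le> (4 * K + 2) * (norm a + 2 * k + 4)" if "n \<in> T" "n' \<in> T" for n n'
    by (rule arith_core[OF s _ _ bnd[OF that(1)] bnd[OF that(2)] _ _ _ _ K _ k key_identity[OF s] key_identity[OF s]])
       (use Tp[OF that(1)] Tp[OF that(2)] vb[OF that(1)] vb[OF that(2)] in auto)
  have "finite T \<and> real (card T) \<le> 512 * ((4 * K + 2) * (norm a + 2 * k + 4) / norm a + 1) * (k + 1)"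
  proof (rule slab_count[OF ne TL k])
    show "0 \<le> (4 * K + 2) * (norm a + 2 * k + 4) / norm a" using K k na by simp
    show "k \<le> norm n \<and> norm n \<le> k + 1" if "n \<in> T" for n using Tp[OF that] by simp
    show "\<bar>n \<bullet> e - n' \<bullet> e\<bar> \<le> (4 * K + 2) * (norm a + 2 * k + 4) / norm a" if "n \<in> T" "n' \<in> T" for n n'
    proof -
      have "n \<bullet> e - n' \<bullet> e = (a \<bullet> n - a \<bullet> n') / norm a" by (simp add: ie diff_divide_distrib)
      then have "\<bar>n \<bullet> e - n' \<bullet> e\<bar> = \<bar>a \<bullet> n - a \<bullet> n'\<bar> / norm a" using na by simp
      then show ?thesis using diff[OF that] na by (simp add: divide_right_mono)
    qed
  qed
  then show ?thesis .
qed

lemma core_count: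
  fixes a :: "real^3" and m :: real
  assumes c: "c \<ge> 1" and K: "K > 0" and R: "R \<ge> 1" and s: "s \<in> {1, -1}"
  defines "U \<equiv> {n \<in> lattice3. norm n \<le> c * R \<and> \<bar>jbr (a + n) + s * jbr n - m\<bar> \<le> K}"
  shows "finite U \<and> real (card U) \<le> 10240 * c^3 * R^3 \<and>
    (a \<noteq> 0 \<longrightarrow> real (card U) \<le> 12288 * c^3 * (4 * K + 3) * R^2 * (1 + R / norm a))"
proof -
  define X where "X = c * R"
  have X1: "X \<ge> 1" unfolding X_def using c R by (metis mult_mono' mult_1 zero_le_one)
  define Kn where "Kn = nat \<lfloor>X\<rfloor>"
  define Uk where "Uk k = {n \<in> U. real k \<le> norm n \<and> norm n \<le> real k + 1}" for k :: nat
  have finU: "finite U"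
    by (rule finite_subset[OF _ lattice_bounded_finite[of "c * R"]]) (auto simp: U_def)
  have cover: "U \<subseteq> (\<Union>k\<in>{0..Kn}. Uk k)"
  proof
    fix n assume n: "n \<in> U"
    define k where "k = nat \<lfloor>norm n\<rfloor>"
    have rk: "real k = of_int \<lfloor>norm n\<rfloor>" by (simp add: k_def)
    have "real k \<le> norm n" "norm n \<le> real k + 1" using rk by linarith+
    then have "n \<in> Uk k" using n by (simp add: Uk_def)
    moreover have "k \<le> Kn" unfolding k_def Kn_def
      by (intro nat_mono floor_mono) (use n in \<open>simp add: U_def X_def\<close>)
    ultimately show "n \<in> (\<Union>k\<in>{0..Kn}. Uk k)" by auto
  qed
  have cardU: "real (card U) \<le> (\<Sum>k\<in>{0..Kn}. real (card (Uk k)))"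
  proof -
    have "card U \<le> card (\<Union>k\<in>{0..Kn}. Uk k)"
      by (rule card_mono[OF _ cover]) (use finU in \<open>auto simp: Uk_def\<close>)
    also have "\<dots> \<le> (\<Sum>k\<in>{0..Kn}. card (Uk k))" by (rule card_UN_le) simp
    finally show ?thesis by (metis of_nat_le_iff of_nat_sum)
  qed
  have kX: "real k \<le> X" if "k \<in> {0..Kn}" for k
  proof -
    have "real k \<le> real Kn" using that by simp
    also have "\<dots> \<le> X" unfolding Kn_def using X1 by linarith
    finally show ?thesis .
  qed
  have Kn1: "real Kn + 1 \<le> 2 * X" using kX[of Kn] X1 by simp
  have UkL: "Uk k \<subseteq> lattice3" for k by (auto simp: Uk_def U_def)
  have triv: "real (card (Uk k)) \<le> 5120 * X^2" if "k \<in> {0..Kn}" for k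
  proof -
    have "real (card (Uk k)) \<le> 512 * (2 * real k + 3) * (real k + 1)"
      by (rule conjunct2[OF shell_triv[OF UkL]]) (auto simp: Uk_def)
    also have "\<dots> \<le> 512 * (5 * X) * (2 * X)"
      using kX[OF that] X1 by (intro mult_mono) auto
    also have "\<dots> = 5120 * X^2" by (simp add: power2_eq_square)
    finally show ?thesis .
  qed
  have T1: "real (card U) \<le> 10240 * c^3 * R^3"
  proof -
    have "real (card U) \<le> (\<Sum>k\<in>{0..Kn}. 5120 * X^2)"
      using cardU sum_mono[of "{0..Kn}" "\<lambda>k. real (card (Uk k))" "\<lambda>k. 5120 * X^2", OF triv] by linarith
    also have "\<dots> = (real Kn + 1) * (5120 * X^2)" by simp
    also have "\<dots> \<le> (2 * X) * (5120 * X^2)" using Kn1 by (intro mult_right_mono) auto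
    also have "\<dots> = 10240 * c^3 * R^3" by (simp add: X_def power2_eq_square power3_eq_cube)
    finally show ?thesis .
  qed
  have T2: "real (card U) \<le> 12288 * c^3 * (4 * K + 3) * R^2 * (1 + R / norm a)" if a0: "a \<noteq> 0"
  proof -
    define \<alpha> where "\<alpha> = norm a"
    have \<alpha>: "\<alpha> > 0" using a0 by (simp add: \<alpha>_def)
    have nt: "real (card (Uk k)) \<le> 512 * (4 * K + 3) * (1 + 6 * X / \<alpha>) * (2 * X)" if k: "k \<in> {0..Kn}" for k
    proof -
      have "real (card (Uk k)) \<le> 512 * ((4 * K + 2) * (\<alpha> + 2 * real k + 4) / \<alpha> + 1) * (real k + 1)"
        unfolding \<alpha>_def
        by (rule conjunct2[OF shell_nontriv[OF a0 s _ _ UkL, where K=K and k="real k" and m=m]]) (use K in \<open>auto simp: Uk_def U_def\<close>)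
      also have "\<dots> \<le> 512 * ((4 * K + 3) * (1 + 6 * X / \<alpha>)) * (2 * X)"
      proof (intro mult_mono mult_left_mono)
        have "(\<alpha> + 2 * real k + 4) / \<alpha> = 1 + (2 * real k + 4) / \<alpha>" using \<alpha> by (simp add: field_simps)
        also have "\<dots> \<le> 1 + 6 * X / \<alpha>" using kX[OF k] X1 \<alpha> by (simp add: divide_right_mono)
        finally have "(4 * K + 2) * ((\<alpha> + 2 * real k + 4) / \<alpha>) \<le> (4 * K + 2) * (1 + 6 * X / \<alpha>)"
          using K by (intro mult_left_mono) auto
        moreover have "1 \<le> 1 + 6 * X / \<alpha>" using X1 \<alpha> by simp
        moreover have "(4 * K + 2) * (\<alpha> + 2 * real k + 4) / \<alpha> = (4 * K + 2) * ((\<alpha> + 2 * real k + 4) / \<alpha>)"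
          by simp
        moreover have "(4 * K + 3) * (1 + 6 * X / \<alpha>) = (4 * K + 2) * (1 + 6 * X / \<alpha>) + (1 + 6 * X / \<alpha>)"
          by (simp add: algebra_simps)
        ultimately show "(4 * K + 2) * (\<alpha> + 2 * real k + 4) / \<alpha> + 1 \<le> (4 * K + 3) * (1 + 6 * X / \<alpha>)"
          by linarith
        show "real k + 1 \<le> 2 * X" using kX[OF k] X1 by simp
      qed (use K \<alpha> X1 in auto)
      finally show ?thesis by (simp only: mult.assoc)
    qed
    have "real (card U) \<le> (\<Sum>k\<in>{0..Kn}. 512 * (4 * K + 3) * (1 + 6 * X / \<alpha>) * (2 * X))"
      using cardU sum_mono[of "{0..Kn}" "\<lambda>k. real (card (Uk k))", OF nt] by linarith
    also have "\<dots> = (real Kn + 1) * (512 * (4 * K + 3) * (1 + 6 * X / \<alpha>) * (2 * X))" by simp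
    also have "\<dots> \<le> (2 * X) * (512 * (4 * K + 3) * (1 + 6 * X / \<alpha>) * (2 * X))"
      using Kn1 K X1 \<alpha> by (intro mult_right_mono) auto
    also have "\<dots> = 2048 * (4 * K + 3) * (c^2 * R^2 * (1 + 6 * c * R / \<alpha>))"
      by (simp add: X_def power2_eq_square algebra_simps)
    also have "\<dots> \<le> 2048 * (4 * K + 3) * (c^2 * R^2 * (6 * c * (1 + R / \<alpha>)))"
    proof (intro mult_left_mono)
      have "1 + 6 * c * R / \<alpha> \<le> 6 * c + 6 * c * (R / \<alpha>)" using c by simp
      then show "1 + 6 * c * R / \<alpha> \<le> 6 * c * (1 + R / \<alpha>)" by (simp add: algebra_simps)
    qed (use K in auto)
    also have "\<dots> = 12288 * c^3 * (4 * K + 3) * R^2 * (1 + R / norm a)"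
      by (simp add: \<alpha>_def power2_eq_square power3_eq_cube algebra_simps)
    finally show ?thesis .
  qed
  show ?thesis using finU T1 T2 by blast
qed


lemma sim_le: "sim c t N \<Longrightarrow> c \<ge> 1 \<Longrightarrow> t \<le> c * N"
  unfolding sim_def by (auto split: if_splits)

lemma lattice_add: "x \<in> lattice3 \<Longrightarrow> y \<in> lattice3 \<Longrightarrow> x + y \<in> lattice3"
  unfolding lattice3_def by auto

lemma lattice_uminus: "x \<in> lattice3 \<Longrightarrow> - x \<in> lattice3"
  unfolding lattice3_def by auto

lemma final_bound:
  fixes x c K R A :: real and a :: "real^3"
  assumes c: "c \<ge> 1" and K: "K > 0" and R: "R \<ge> 1" and A: "A \<ge> 1" and sa: "sim c (norm a) A"
    and x1: "x \<le> 10240 * c^3 * R^3"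
    and x2: "a \<noteq> 0 \<longrightarrow> x \<le> 12288 * c^3 * (4 * K + 3) * R^2 * (1 + R / norm a)"
  shows "x \<le> 12288 * c^3 * (4 * K + 3) * (1 + c) * R^3 / min A R"
proof -
  define C0 where "C0 = 12288 * c^3 * (4 * K + 3)"
  have c3: "c^3 \<ge> 1" using c by (simp add: one_le_power)
  have C0pos: "C0 > 0" unfolding C0_def using c3 K c by (auto intro!: mult_pos_pos)
  have C0big: "10240 * c^3 \<le> C0"
  proof -
    have "c^3 * 1 \<le> c^3 * (4 * K + 3)" using c3 K c by (intro mult_left_mono) auto
    then show ?thesis unfolding C0_def mult.assoc using c3 by linarith
  qed
  have R3: "R^3 > 0" using R by simp
  show ?thesis
  proof (cases "A = 1")
    case True
    then have "min A R = 1" using R by simp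
    moreover have "10240 * c^3 * R^3 \<le> C0 * (1 + c) * R^3"
    proof -
      have "C0 * 1 \<le> C0 * (1 + c)" using C0pos c by (intro mult_left_mono) auto
      then have "10240 * c^3 \<le> C0 * (1 + c)" using C0big by linarith
      then show ?thesis using R3 by (intro mult_right_mono) auto
    qed
    ultimately have "x \<le> C0 * (1 + c) * R^3 / min A R" using x1 by simp
    then show ?thesis unfolding C0_def .
  next
    case False
    then have aA: "A / c \<le> norm a" using sa unfolding sim_def by simp
    have c0: "c > 0" using c by simp
    have "A / c > 0" using A c0 by simp
    then have na: "norm a > 0" using aA by linarith
    then have a0: "a \<noteq> 0" by auto
    have xb: "x \<le> C0 * R^2 * (1 + R / norm a)" using x2 a0 unfolding C0_def by simp
    have Ra: "R / norm a \<le> c * R / A"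
    proof -
      have "R / norm a \<le> R / (A / c)" using aA A c0 R na by (intro divide_left_mono) auto
      then show ?thesis by (simp add: mult.commute)
    qed
    have xb2: "x \<le> C0 * R^2 * (1 + c * R / A)"
    proof -
      have "C0 * R^2 * (1 + R / norm a) \<le> C0 * R^2 * (1 + c * R / A)"
        using Ra C0pos by (intro mult_left_mono) auto
      then show ?thesis using xb by linarith
    qed
    show ?thesis
    proof (cases "A \<le> R")
      case True
      then have m: "min A R = A" by simp
      have "R^2 \<le> R^3 / A"
      proof -
        have "R^2 * A \<le> R^2 * R" using True by (intro mult_left_mono) auto
        then show ?thesis using A by (simp add: field_simps power2_eq_square power3_eq_cube)
      qed
      then have "R^2 * (1 + c * R / A) \<le> R^3 / A + c * (R^3 / A)"
        by (simp add: algebra_simps power2_eq_square power3_eq_cube)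
      also have "\<dots> = (1 + c) * R^3 / A" using A by (simp add: field_simps)
      finally have "C0 * (R^2 * (1 + c * R / A)) \<le> C0 * ((1 + c) * R^3 / A)"
        using C0pos by (intro mult_left_mono) auto
      then show ?thesis using xb2 m unfolding C0_def by (simp add: mult.assoc)
    next
      case False
      then have m: "min A R = R" by simp
      have "c * R / A \<le> c" using False c0 A by (simp add: field_simps)
      then have "C0 * R^2 * (1 + c * R / A) \<le> C0 * R^2 * (1 + c)"
        using C0pos by (intro mult_left_mono) auto
      also have "\<dots> = C0 * (1 + c) * R^3 / R" using R by (simp add: power2_eq_square power3_eq_cube)
      finally show ?thesis using xb2 m unfolding C0_def by simp
    qed
  qed
qed

lemma lemma4p17_aux:
  fixes c K :: real
  assumes "c \<ge> 1" and "K > 0"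
  shows "\<exists>C>0. \<forall>N A B :: real. \<forall>a :: real ^ 3. \<forall>s :: real. \<forall>m :: int.
    N \<ge> 1 \<longrightarrow> A \<ge> 1 \<longrightarrow> B \<ge> 1 \<longrightarrow> a \<in> lattice3 \<longrightarrow> sim c (norm a) A \<longrightarrow>
    s \<in> {1, -1} \<longrightarrow>
    (let S = {n \<in> lattice3. sim c (norm n) N \<and> sim c (norm (n + a)) B \<and>
                 \<bar>jbr (a + n) + s * jbr n - of_int m\<bar> \<le> K}
     in finite S \<and> real (card S) \<le> C * (min B N) ^ 3 / min (min A B) N)"
proof -
  note c = assms(1) and K = assms(2)
  define C where "C = 12288 * c^3 * (4 * K + 3) * (1 + c)"
  have Cpos: "C > 0" unfolding C_def using c K by simp
  have main: "finite S \<and> real (card S) \<le> C * (min B N) ^ 3 / min (min A B) N"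
    if N: "N \<ge> 1" and A: "A \<ge> 1" and B: "B \<ge> 1" and aL: "a \<in> lattice3" and sa: "sim c (norm a) A"
      and s: "s \<in> {1, -1}"
      and S_def: "S = {n \<in> lattice3. sim c (norm n) N \<and> sim c (norm (n + a)) B \<and>
                 \<bar>jbr (a + n) + s * jbr n - of_int m\<bar> \<le> K}"
    for N A B :: real and a :: "real^3" and s :: real and m :: int and S
  proof (cases "N \<le> B")
    case True
    define U where "U = {n \<in> lattice3. norm n \<le> c * N \<and> \<bar>jbr (a + n) + s * jbr n - real_of_int m\<bar> \<le> K}"
    have SU: "S \<subseteq> U" unfolding S_def U_def using sim_le c by auto
    have cc: "finite U \<and> real (card U) \<le> 10240 * c^3 * N^3 \<and>
       (a \<noteq> 0 \<longrightarrow> real (card U) \<le> 12288 * c^3 * (4 * K + 3) * N^2 * (1 + N / norm a))"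
      unfolding U_def by (rule core_count[OF c K N s])
    have finS: "finite S" using cc SU finite_subset by blast
    have "card S \<le> card U" using cc SU card_mono by blast
    then have "real (card S) \<le> 12288 * c^3 * (4 * K + 3) * (1 + c) * N^3 / min A N"
      using cc by (intro final_bound[OF c K N A sa]) auto
    moreover have "min B N = N" "min (min A B) N = min A N" using True by auto
    ultimately show ?thesis using finS unfolding C_def by simp
  next
    case False
    define g where "g n = - (n + a)" for n :: "real^3"
    have ginj: "inj g" unfolding g_def by (rule injI) simp
    define U where "U = {n \<in> lattice3. norm n \<le> c * B \<and> \<bar>jbr (a + n) + s * jbr n - s * real_of_int m\<bar> \<le> K}"
    have s2: "s * s = 1" using s by auto
    have s1: "\<bar>s\<bar> = 1" using s by auto
    have gSU: "g ` S \<subseteq> U"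
    proof
      fix y assume "y \<in> g ` S"
      then obtain n where n: "n \<in> S" "y = g n" by auto
      have nL: "n \<in> lattice3" and nB: "sim c (norm (n + a)) B"
        and nK: "\<bar>jbr (a + n) + s * jbr n - of_int m\<bar> \<le> K" using n(1) unfolding S_def by auto
      have "y \<in> lattice3" unfolding n(2) g_def by (intro lattice_uminus lattice_add nL aL)
      moreover have "norm y = norm (n + a)" unfolding n(2) g_def by (rule norm_minus_cancel)
      then have "norm y \<le> c * B" using sim_le[OF nB c] by simp
      moreover have "\<bar>jbr (a + y) + s * jbr y - s * real_of_int m\<bar> \<le> K"
      proof -
        have ay: "a + y = - n" unfolding n(2) g_def by simp
        have "jbr y = jbr (n + a)" unfolding n(2) g_def by (rule jbr_minus)
        then have yy: "jbr y = jbr (a + n)" by (simp add: add.commute)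
        have "jbr (a + y) + s * jbr y - s * real_of_int m = s * (jbr (a + n) + s * jbr n - real_of_int m)"
          using s2 by (simp add: ay yy jbr_minus algebra_simps)
        then have "\<bar>jbr (a + y) + s * jbr y - s * real_of_int m\<bar> = \<bar>jbr (a + n) + s * jbr n - real_of_int m\<bar>"
          using s1 by (simp add: abs_mult)
        then show ?thesis using nK by simp
      qed
      ultimately show "y \<in> U" unfolding U_def by blast
    qed
    have cc: "finite U \<and> real (card U) \<le> 10240 * c^3 * B^3 \<and>
       (a \<noteq> 0 \<longrightarrow> real (card U) \<le> 12288 * c^3 * (4 * K + 3) * B^2 * (1 + B / norm a))"
      unfolding U_def by (rule core_count[OF c K B s])
    have fin: "finite (g ` S)" using cc gSU finite_subset by blast
    then have finS: "finite S" using ginj finite_imageD inj_on_subset by blast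
    have "card (g ` S) \<le> card U" using cc gSU card_mono by blast
    moreover have "card (g ` S) = card S" using ginj by (simp add: card_image inj_on_subset)
    ultimately have "card S \<le> card U" by simp
    then have "real (card S) \<le> 12288 * c^3 * (4 * K + 3) * (1 + c) * B^3 / min A B"
      using cc by (intro final_bound[OF c K B A sa]) auto
    moreover have "min B N = B" "min (min A B) N = min A B" using False by auto
    ultimately show ?thesis using finS unfolding C_def by simp
  qed
  show ?thesis
    by (rule exI[of _ C], intro conjI Cpos allI impI) (unfold Let_def, rule main, auto)
qed


theorem lemma4p17:
  fixes c K :: real
  assumes "c \<ge> 1" and "K > 0"
  shows "\<exists>C>0. \<forall>N A B :: real. \<forall>a :: real ^ 3. \<forall>s :: real. \<forall>m :: int.
    N \<ge> 1 \<longrightarrow> A \<ge> 1 \<longrightarrow> B \<ge> 1 \<longrightarrow> a \<in> lattice3 \<longrightarrow> sim c (norm a) A \<longrightarrow>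
    s \<in> {1, -1} \<longrightarrow>
    (let S = {n \<in> lattice3. sim c (norm n) N \<and> sim c (norm (n + a)) B \<and>
                 \<bar>jbr (a + n) + s * jbr n - of_int m\<bar> \<le> K}
     in finite S \<and> real (card S) \<le> C * (min B N) ^ 3 / min (min A B) N)"
  using assms by (rule lemma4p17_aux)

end
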